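(* Fix a bandit $k$ and a labeling $L$, and let $H$ be one of the hypotheses RN, RA, RS. Suppose $q^k$ is entrywise nonnegative and transient and that $(q^k,r^k)$ satisfies $H$. Run the Triangularizer on bandit $k$ in accord with $L$. Then every execution of Step 2 is well defined (the current value $q(i,i)$ of the selected state $i$ satisfies $q(i,i)<1$), and after each execution of Step 2 the current data $(\bar q^k,\bar r^k)$, defined by writing the current tableau as $[(I-\bar q^k),\bar r^k]$, satisfy: $\bar q^k$ is entrywise nonnegative and transient, and $(\bar q^k,\bar r^k)$ satisfies the same hypothesis $H$.
   Context: Bandit $k$ has a finite state set $N_k$, real transition rates $q(i,j)$ ($i,j\in N_k$) forming the matrix $q^k$, and real rewards $r(i)$ forming the vector $r^k$. A square matrix is transient if its powers tend to $0$ entrywise. Hypotheses for bandit $k$: (RN) $q^k$ is substochastic, i.e. $\sum_{j\in N_k}q(i,j)\le 1$ for all $i\in N_k$; (RA) $r(i)\le 0$ for all $i\in N_k$; (RS) $r(i)\ge 0$ for all $i\in N_k$. Let $N$ be the union of the state sets of all bandits (pairwise disjoint) and $0\notin N$. A labeling is an injective map $L:N\cup\{0\}\to\{1,\dots,|N|+1\}$ with $L(0)=|N|+1$. Triangularizer for bandit $k$ in accord with $L$: start with the $|N_k|\times(|N_k|+1)$ tableau $T=[(I-q^k),r^k]$ (rows and first $|N_k|$ columns indexed by $N_k$, last column the reward column) and set $M=N_k$. At every stage write the current tableau as $[(I-q),r]$, thereby defining the current data $q(\cdot,\cdot)$, $r(\cdot)$. While $M\ne\emptyset$ do: Step 2: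 let $i\in M$ have the smallest label $L(i)$; set $\alpha=1/[1-q(i,i)]$ (current value); (a) replace row $i$ of the tableau by $\alpha$ times itself; (b) for each $j\in M\setminus\{i\}$, replace row $j$ by itself plus $q(j,i)$ (current value, before this step) times the updated row $i$. Step 3: replace $M$ by $M\setminus\{i\}$. *)

theory Defs
  imports Complex_Main
begin

text \<open>Matrices over a finite index set S are functions 'a => 'a => real
  (only entries with indices in S matter).  Powers of such a matrix:\<close>

fun mat_pow :: "'a set \<Rightarrow> ('a \<Rightarrow> 'a \<Rightarrow> real) \<Rightarrow> nat \<Rightarrow> 'a \<Rightarrow> 'a \<Rightarrow> real" where
  "mat_pow S A 0 = (\<lambda>i j. if i = j then 1 else 0)"
| "mat_pow S A (Suc n) = (\<lambda>i j. \<Sum>l\<in>S. A i l * mat_pow S A n l j)"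

definition transient :: "'a set \<Rightarrow> ('a \<Rightarrow> 'a \<Rightarrow> real) \<Rightarrow> bool" where
  "transient S A \<longleftrightarrow> (\<forall>i\<in>S. \<forall>j\<in>S. (\<lambda>n. mat_pow S A n i j) \<longlonglongrightarrow> 0)"

definition nonneg_mat :: "'a set \<Rightarrow> ('a \<Rightarrow> 'a \<Rightarrow> real) \<Rightarrow> bool" where
  "nonneg_mat S A \<longleftrightarrow> (\<forall>i\<in>S. \<forall>j\<in>S. 0 \<le> A i j)"

datatype hyp = RN | RA | RS

definition hyp_holds :: "hyp \<Rightarrow> 'a set \<Rightarrow> ('a \<Rightarrow> 'a \<Rightarrow> real) \<Rightarrow> ('a \<Rightarrow> real) \<Rightarrow> bool" where
  "hyp_holds H S q r = (case H of
      RN \<Rightarrow> (\<forall>i\<in>S. (\<Sum>j\<in>S. q i j) \<le> 1)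
    | RA \<Rightarrow> (\<forall>i\<in>S. r i \<le> 0)
    | RS \<Rightarrow> (\<forall>i\<in>S. r i \<ge> 0))"

text \<open>Labeling of N \<union> {0}: the extra state 0 is represented by None.\<close>
definition labeling :: "'a set \<Rightarrow> ('a option \<Rightarrow> nat) \<Rightarrow> bool" where
  "labeling N L \<longleftrightarrow> inj_on L (insert None (Some ` N))
     \<and> L ` (insert None (Some ` N)) \<subseteq> {1..card N + 1}
     \<and> L None = card N + 1"

text \<open>Tableau: rows indexed by states, columns by Some state (the (I-q) part)
  and None (the reward column).\<close>
type_synonym 'a tableau = "'a \<Rightarrow> 'a option \<Rightarrow> real"

definition cur_q :: "'a tableau \<Rightarrow> 'a \<Rightarrow> 'a \<Rightarrow> real" where
  "cur_q T j l = (if j = l then 1 else 0) - T j (Some l)"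

definition cur_r :: "'a tableau \<Rightarrow> 'a \<Rightarrow> real" where
  "cur_r T j = T j None"

definition init_tableau :: "('a \<Rightarrow> 'a \<Rightarrow> real) \<Rightarrow> ('a \<Rightarrow> real) \<Rightarrow> 'a tableau" where
  "init_tableau q r = (\<lambda>j c. case c of None \<Rightarrow> r j
                                   | Some l \<Rightarrow> (if j = l then 1 else 0) - q j l)"

definition select :: "('a option \<Rightarrow> nat) \<Rightarrow> 'a set \<Rightarrow> 'a" where
  "select L M = arg_min_on (\<lambda>s. L (Some s)) M"

text \<open>One execution of Step 2 followed by Step 3 (identity once M is empty).\<close>
definition tri_step :: "('a option \<Rightarrow> nat) \<Rightarrow> 'a tableau \<times> 'a set \<Rightarrow> 'a tableau \<times> 'a set" where
  "tri_step L TM = (let T = fst TM; M = snd TM in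
     if M = {} then (T, M) else
     (let i = select L M;
          \<alpha> = 1 / (1 - cur_q T i i);
          Ti = (\<lambda>c. \<alpha> * T i c);
          T' = (\<lambda>j c. if j = i then Ti c
                      else if j \<in> M then T j c + cur_q T j i * Ti c
                      else T j c)
      in (T', M - {i})))"

definition tri_run :: "('a option \<Rightarrow> nat) \<Rightarrow> 'a set \<Rightarrow> ('a \<Rightarrow> 'a \<Rightarrow> real) \<Rightarrow> ('a \<Rightarrow> real)
    \<Rightarrow> nat \<Rightarrow> 'a tableau \<times> 'a set" where
  "tri_run L Nk q r n = (tri_step L ^^ n) (init_tableau q r, Nk)"

end

theory Submission
  imports Defs
begin

lemma mat_pow_nonneg:
  assumes "nonneg_mat S A" "i \<in> S" "j \<in> S"
  shows "0 \<le> mat_pow S A n i j"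
  using assms(2,3)
proof (induction n arbitrary: i)
  case 0 then show ?case by simp
next
  case (Suc n)
  show ?case using Suc assms(1) unfolding nonneg_mat_def
    by (auto intro!: sum_nonneg mult_nonneg_nonneg)
qed

lemma mat_pow_Suc_vec:
  "(\<Sum>l\<in>S. mat_pow S A (Suc n) i l * y l) = (\<Sum>m\<in>S. A i m * (\<Sum>l\<in>S. mat_pow S A n m l * y l))"
proof -
  have "(\<Sum>l\<in>S. mat_pow S A (Suc n) i l * y l) = (\<Sum>l\<in>S. \<Sum>m\<in>S. A i m * (mat_pow S A n m l * y l))"
    by (simp add: sum_distrib_right mult.assoc)
  also have "\<dots> = (\<Sum>m\<in>S. \<Sum>l\<in>S. A i m * (mat_pow S A n m l * y l))" by (rule sum.swap)
  also have "\<dots> = (\<Sum>m\<in>S. A i m * (\<Sum>l\<in>S. mat_pow S A n m l * y l))" by (simp add: sum_distrib_left)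
  finally show ?thesis .
qed

lemma mat_pow_0_vec: assumes "finite S" "i \<in> S" shows "(\<Sum>l\<in>S. mat_pow S A 0 i l * y l) = y i"
proof -
  have "(\<Sum>l\<in>S. mat_pow S A 0 i l * y l) = (\<Sum>l\<in>S. if i = l then y l else 0)" by (intro sum.cong) auto
  then show ?thesis using assms by (simp add: sum.delta)
qed

lemma transient_if_vec:
  assumes fin: "finite S" and nn: "nonneg_mat S A" and xp: "\<forall>i\<in>S. x i > 0"
    and xs: "\<forall>i\<in>S. (\<Sum>l\<in>S. A i l * x l) < x i"
  shows "transient S A"
proof -
  define \<theta> where "\<theta> = Max (insert 0 ((\<lambda>i. (\<Sum>l\<in>S. A i l * x l) / x i) ` S))"
  have t1: "\<theta> < 1" unfolding \<theta>_def using fin xp xs by (auto simp: Max_less_iff)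
  have t0: "0 \<le> \<theta>" unfolding \<theta>_def using fin by (auto intro: Max_ge)
  have tb: "(\<Sum>l\<in>S. A i l * x l) \<le> \<theta> * x i" if "i \<in> S" for i
  proof -
    have "(\<Sum>l\<in>S. A i l * x l) / x i \<le> \<theta>" unfolding \<theta>_def using fin that by (auto intro: Max_ge)
    then show ?thesis using xp that by (simp add: pos_divide_le_eq)
  qed
  have pb: "\<forall>i\<in>S. (\<Sum>l\<in>S. mat_pow S A n i l * x l) \<le> \<theta>^n * x i" for n
  proof (induction n)
    case 0 then show ?case using fin mat_pow_0_vec[OF fin] by simp
  next
    case (Suc n)
    show ?case
    proof
      fix i assume i: "i \<in> S"
      have "(\<Sum>l\<in>S. mat_pow S A (Suc n) i l * x l) = (\<Sum>m\<in>S. A i m * (\<Sum>l\<in>S. mat_pow S A n m l * x l))"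
        by (rule mat_pow_Suc_vec)
      also have "\<dots> \<le> (\<Sum>m\<in>S. A i m * (\<theta>^n * x m))"
        using Suc nn i unfolding nonneg_mat_def by (auto intro!: sum_mono mult_left_mono)
      also have "\<dots> = \<theta>^n * (\<Sum>m\<in>S. A i m * x m)" by (simp add: sum_distrib_left algebra_simps)
      also have "\<dots> \<le> \<theta>^n * (\<theta> * x i)" using tb[OF i] t0 by (simp add: mult_left_mono)
      finally show "(\<Sum>l\<in>S. mat_pow S A (Suc n) i l * x l) \<le> \<theta> ^ Suc n * x i" by (simp add: algebra_simps)
    qed
  qed
  show ?thesis unfolding transient_def
  proof (intro ballI)
    fix i j assume i: "i \<in> S" and j: "j \<in> S"
    have up: "mat_pow S A n i j \<le> (x i / x j) * \<theta>^n" for n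
    proof -
      have "mat_pow S A n i j * x j \<le> (\<Sum>l\<in>S. mat_pow S A n i l * x l)"
        using fin j mat_pow_nonneg[OF nn i] xp by (intro member_le_sum) (auto intro: mult_nonneg_nonneg less_imp_le)
      also have "\<dots> \<le> \<theta>^n * x i" using pb i by auto
      finally have "mat_pow S A n i j \<le> \<theta>^n * x i / x j" using xp j by (simp add: pos_le_divide_eq)
      then show ?thesis by (simp add: field_simps)
    qed
    have l0: "(\<lambda>n. \<theta>^n) \<longlonglongrightarrow> 0" by (rule LIMSEQ_power_zero) (use t0 t1 in simp)
    have lim: "(\<lambda>n. (x i / x j) * \<theta>^n) \<longlonglongrightarrow> 0" using tendsto_mult_right_zero[OF l0, of "x i / x j"] .
    have ev1: "\<forall>\<^sub>F n in sequentially. 0 \<le> mat_pow S A n i j"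
      by (rule always_eventually) (use mat_pow_nonneg[OF nn i j] in blast)
    have ev2: "\<forall>\<^sub>F n in sequentially. mat_pow S A n i j \<le> (x i / x j) * \<theta>^n"
      by (rule always_eventually) (use up in blast)
    show "(\<lambda>n. mat_pow S A n i j) \<longlonglongrightarrow> 0"
      by (rule tendsto_sandwich[OF ev1 ev2 tendsto_const lim])
  qed
qed

lemma vec_if_transient:
  assumes fin: "finite S" and nn: "nonneg_mat S A" and tr: "transient S A"
  shows "\<exists>x. (\<forall>i\<in>S. x i > 0) \<and> (\<forall>i\<in>S. (\<Sum>l\<in>S. A i l * x l) < x i)"
proof -
  define R where "R k i = (\<Sum>l\<in>S. mat_pow S A k i l)" for k i
  have "\<forall>\<^sub>F n in sequentially. \<forall>i\<in>S. R n i < 1"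
  proof (rule eventually_ball_finite[OF fin], intro ballI)
    fix i assume i: "i \<in> S"
    have "(\<lambda>n. R n i) \<longlonglongrightarrow> 0" unfolding R_def
      using tr i unfolding transient_def by (intro tendsto_null_sum) auto
    then show "\<forall>\<^sub>F n in sequentially. R n i < 1" by (rule order_tendstoD) simp
  qed
  then obtain N where N: "\<And>n. n \<ge> N \<Longrightarrow> \<forall>i\<in>S. R n i < 1" by (auto simp: eventually_sequentially)
  define m where "m = Suc N"
  define x where "x i = (\<Sum>k<m. R k i)" for i
  have R0: "R 0 i = 1" if "i \<in> S" for i unfolding R_def using fin that by simp
  have Rnn: "R k i \<ge> 0" if "i \<in> S" for k i unfolding R_def using mat_pow_nonneg[OF nn that] by (auto intro: sum_nonneg)
  have RS: "(\<Sum>l\<in>S. A i l * R k l) = R (Suc k) i" for i k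
    using mat_pow_Suc_vec[of S A k i "\<lambda>_. 1"] by (simp add: R_def)
  show ?thesis
  proof (intro exI conjI ballI)
    fix i assume i: "i \<in> S"
    have "x i = R 0 i + (\<Sum>k<N. R (Suc k) i)" unfolding x_def m_def by (rule sum.lessThan_Suc_shift)
    also have "\<dots> \<ge> 1" using R0[OF i] Rnn[OF i] by (simp add: sum_nonneg)
    finally show "x i > 0" by simp
  next
    fix i assume i: "i \<in> S"
    have "(\<Sum>l\<in>S. A i l * x l) = (\<Sum>k<m. \<Sum>l\<in>S. A i l * R k l)"
      unfolding x_def by (simp add: sum_distrib_left) (rule sum.swap)
    also have "\<dots> = (\<Sum>k<m. R (Suc k) i)" by (simp add: RS)
    also have "\<dots> = x i - R 0 i + R m i" unfolding x_def
      using sum.lessThan_Suc_shift[of "\<lambda>k. R k i" m] sum.lessThan_Suc[of "\<lambda>k. R k i" m] by simp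
    also have "\<dots> < x i" using R0[OF i] N[of m] i by (auto simp: m_def)
    finally show "(\<Sum>l\<in>S. A i l * x l) < x i" .
  qed
qed


lemma step_props:
  fixes T :: "'a tableau"
  assumes fin: "finite Nk" and MS: "M \<subseteq> Nk" and iM: "i \<in> M"
    and nn: "nonneg_mat Nk (cur_q T)" and xp: "\<forall>j\<in>Nk. x j > 0"
    and xs: "\<forall>j\<in>Nk. (\<Sum>l\<in>Nk. cur_q T j l * x l) < x j"
    and hy: "hyp_holds H Nk (cur_q T) (cur_r T)"
    and ad: "\<alpha> = 1 / (1 - cur_q T i i)"
    and T'd: "T' = (\<lambda>j c. if j = i then \<alpha> * T i c
                      else if j \<in> M then T j c + cur_q T j i * (\<alpha> * T i c) else T j c)"
  shows "cur_q T i i < 1 \<and> nonneg_mat Nk (cur_q T')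
     \<and> (\<forall>j\<in>Nk. (\<Sum>l\<in>Nk. cur_q T' j l * x l) < x j) \<and> hyp_holds H Nk (cur_q T') (cur_r T')"
proof -
  define q where "q = cur_q T"
  have iN: "i \<in> Nk" using MS iM by auto
  have qnn: "\<And>j l. j \<in> Nk \<Longrightarrow> l \<in> Nk \<Longrightarrow> 0 \<le> q j l" using nn unfolding nonneg_mat_def q_def by auto
  have "q i i * x i \<le> (\<Sum>l\<in>Nk. q i l * x l)"
    by (rule member_le_sum[OF iN _ fin]) (use qnn[OF iN] xp in \<open>meson DiffD1 less_imp_le mult_nonneg_nonneg\<close>)
  also have "\<dots> < x i" using xs iN q_def by auto
  finally have "q i i * x i < 1 * x i" by simp
  moreover have xi: "0 \<le> x i" using xp iN less_imp_le by blast
  ultimately have qii: "q i i < 1" by (rule mult_right_less_imp_less)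
  have ap: "\<alpha> > 0" using ad qii q_def by simp
  have a1: "\<alpha> * (1 - q i i) = 1" using ad qii q_def by simp
  have cq: "cur_q T' j l = (if j = i then (if l = i then 1 else 0) * (1 - \<alpha>) + \<alpha> * q i l
        else if j \<in> M then q j l + \<alpha> * q j i * (q i l - (if l = i then 1 else 0)) else q j l)" for j l
    unfolding q_def cur_q_def T'd by (simp add: algebra_simps)
  have cr: "cur_r T' j = (if j = i then \<alpha> * cur_r T i
        else if j \<in> M then cur_r T j + q j i * (\<alpha> * cur_r T i) else cur_r T j)" for j
    unfolding q_def cur_r_def T'd by simp
  have dsum: "(\<Sum>l\<in>Nk. (if l = i then 1 else 0) * c * y l) = c * y i" for c and y :: "'a \<Rightarrow> real"
  proof -
    have "(\<Sum>l\<in>Nk. (if l = i then 1 else 0) * c * y l) = (\<Sum>l\<in>Nk. if l = i then c * y i else 0)"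
      by (intro sum.cong) auto
    then show ?thesis using fin iN by simp
  qed
  have sumf: "(\<Sum>l\<in>Nk. cur_q T' j l * y l) = (if j = i then (1 - \<alpha>) * y i + \<alpha> * (\<Sum>l\<in>Nk. q i l * y l)
      else if j \<in> M then (\<Sum>l\<in>Nk. q j l * y l) + \<alpha> * q j i * ((\<Sum>l\<in>Nk. q i l * y l) - y i)
      else (\<Sum>l\<in>Nk. q j l * y l))" for j and y :: "'a \<Rightarrow> real"
  proof (cases "j = i")
    case True
    have "(\<Sum>l\<in>Nk. cur_q T' j l * y l) = (\<Sum>l\<in>Nk. (if l = i then 1 else 0) * (1 - \<alpha>) * y l + \<alpha> * (q i l * y l))"
      using True by (intro sum.cong) (auto simp: cq algebra_simps)
    also have "\<dots> = (1 - \<alpha>) * y i + \<alpha> * (\<Sum>l\<in>Nk. q i l * y l)"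
      by (simp add: sum.distrib dsum sum_distrib_left)
    finally show ?thesis using True by simp
  next
    case False
    show ?thesis
    proof (cases "j \<in> M")
      case True
      have "(\<Sum>l\<in>Nk. cur_q T' j l * y l) = (\<Sum>l\<in>Nk. q j l * y l + (\<alpha> * q j i) * (q i l * y l)
              - (if l = i then 1 else 0) * (\<alpha> * q j i) * y l)"
        using True False by (intro sum.cong) (auto simp: cq algebra_simps)
      also have "\<dots> = (\<Sum>l\<in>Nk. q j l * y l) + \<alpha> * q j i * ((\<Sum>l\<in>Nk. q i l * y l) - y i)"
      proof -
        have "(\<Sum>l\<in>Nk. q j l * y l + (\<alpha> * q j i) * (q i l * y l) - (if l = i then 1 else 0) * (\<alpha> * q j i) * y l)
           = (\<Sum>l\<in>Nk. q j l * y l) + (\<alpha> * q j i) * (\<Sum>l\<in>Nk. q i l * y l) - (\<alpha> * q j i) * y i"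
          by (simp only: sum.distrib sum_subtractf sum_distrib_left[symmetric] dsum)
        then show ?thesis by (simp add: algebra_simps)
      qed
      finally show ?thesis using True False by simp
    next
      case F2: False
      show ?thesis using False F2 by (simp add: cq)
    qed
  qed
  have nn': "nonneg_mat Nk (cur_q T')"
    unfolding nonneg_mat_def
  proof (intro ballI)
    fix j l assume j: "j \<in> Nk" and l: "l \<in> Nk"
    have e1: "(1 - \<alpha>) + \<alpha> * q i i = 0" using a1 by (simp add: algebra_simps)
    have e2: "q j i + \<alpha> * q j i * (q i i - 1) = 0"
    proof -
      have "q j i + \<alpha> * q j i * (q i i - 1) = q j i * (1 - \<alpha> * (1 - q i i))" by (simp add: algebra_simps)
      then show ?thesis using a1 by simp
    qed
    show "0 \<le> cur_q T' j l"
      using qnn[OF j l] qnn[OF iN l] qnn[OF j iN] ap e1 e2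
      by (auto simp: cq intro!: mult_nonneg_nonneg add_nonneg_nonneg)
  qed
  have xs': "\<forall>j\<in>Nk. (\<Sum>l\<in>Nk. cur_q T' j l * x l) < x j"
  proof
    fix j assume j: "j \<in> Nk"
    have si: "(\<Sum>l\<in>Nk. q i l * x l) - x i < 0" using xs iN q_def by auto
    have sj: "(\<Sum>l\<in>Nk. q j l * x l) < x j" using xs j q_def by auto
    have m1: "\<alpha> * ((\<Sum>l\<in>Nk. q i l * x l) - x i) < 0" using ap si by (simp add: mult_pos_neg)
    have m2: "\<alpha> * q j i * ((\<Sum>l\<in>Nk. q i l * x l) - x i) \<le> 0"
      using ap qnn[OF j iN] si by (intro mult_nonneg_nonpos) auto
    show "(\<Sum>l\<in>Nk. cur_q T' j l * x l) < x j"
      using m1 m2 sj unfolding sumf[of j x] by (auto simp: algebra_simps)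
  qed
  have hy': "hyp_holds H Nk (cur_q T') (cur_r T')"
  proof (cases H)
    case RN
    have rn: "\<forall>j\<in>Nk. (\<Sum>l\<in>Nk. q j l) \<le> 1" using hy RN unfolding hyp_holds_def q_def by simp
    show ?thesis unfolding hyp_holds_def RN
    proof (simp, intro ballI)
      fix j assume j: "j \<in> Nk"
      have si: "(\<Sum>l\<in>Nk. q i l * 1) - 1 \<le> 0" using rn iN by auto
      have sj: "(\<Sum>l\<in>Nk. q j l * 1) \<le> 1" using rn j by auto
      have m1: "\<alpha> * ((\<Sum>l\<in>Nk. q i l * 1) - 1) \<le> 0" using ap si by (intro mult_nonneg_nonpos) auto
      have m2: "\<alpha> * q j i * ((\<Sum>l\<in>Nk. q i l * 1) - 1) \<le> 0"
        using ap qnn[OF j iN] si by (intro mult_nonneg_nonpos) auto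
      have "(\<Sum>l\<in>Nk. cur_q T' j l * 1) \<le> 1"
        using m1 m2 sj unfolding sumf[of j "\<lambda>_. 1"] by (auto simp: algebra_simps)
      then show "(\<Sum>l\<in>Nk. cur_q T' j l) \<le> 1" by simp
    qed
  next
    case RA
    have r: "\<forall>j\<in>Nk. cur_r T j \<le> 0" using hy RA unfolding hyp_holds_def by simp
    show ?thesis unfolding hyp_holds_def RA
      using r iN qnn[OF _ iN] ap
      by (auto simp: cr intro!: add_nonpos_nonpos mult_nonneg_nonpos mult_pos_neg)
  next
    case RS
    have r: "\<forall>j\<in>Nk. cur_r T j \<ge> 0" using hy RS unfolding hyp_holds_def by simp
    show ?thesis unfolding hyp_holds_def RS
      using r iN qnn[OF _ iN] ap
      by (auto simp: cr intro!: add_nonneg_nonneg mult_nonneg_nonneg)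
  qed
  show ?thesis using qii nn' xs' hy' q_def by simp
qed


lemma tri_run_Suc: "tri_run L Nk q r (Suc n) = tri_step L (tri_run L Nk q r n)"
  by (simp add: tri_run_def)

lemma init_q: "cur_q (init_tableau q r) = q" by (auto simp: fun_eq_iff cur_q_def init_tableau_def)
lemma init_r: "cur_r (init_tableau q r) = r" by (auto simp: fun_eq_iff cur_r_def init_tableau_def)

lemma select_in: "finite M \<Longrightarrow> M \<noteq> {} \<Longrightarrow> select L M \<in> M"
  unfolding select_def by (rule arg_min_if_finite(1))

lemma tri_step_nonempty:
  assumes "M \<noteq> {}"
  shows "tri_step L (T, M) = ((\<lambda>j c. if j = select L M then (1 / (1 - cur_q T (select L M) (select L M))) * T (select L M) c
                      else if j \<in> M then T j c + cur_q T j (select L M) * ((1 / (1 - cur_q T (select L M) (select L M))) * T (select L M) c) else T j c), M - {select L M})"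
  using assms by (simp add: tri_step_def Let_def)

lemma invariant:
  assumes fin: "finite Nk" and nn: "nonneg_mat Nk q" and xp: "\<forall>j\<in>Nk. x j > 0"
    and xs: "\<forall>j\<in>Nk. (\<Sum>l\<in>Nk. q j l * x l) < x j" and hy: "hyp_holds H Nk q r"
  shows "snd (tri_run L Nk q r n) \<subseteq> Nk \<and> card (snd (tri_run L Nk q r n)) = card Nk - n
    \<and> nonneg_mat Nk (cur_q (fst (tri_run L Nk q r n)))
    \<and> (\<forall>j\<in>Nk. (\<Sum>l\<in>Nk. cur_q (fst (tri_run L Nk q r n)) j l * x l) < x j)
    \<and> hyp_holds H Nk (cur_q (fst (tri_run L Nk q r n))) (cur_r (fst (tri_run L Nk q r n)))"
proof (induction n)
  case 0 then show ?case using assms by (simp add: tri_run_def init_q init_r)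
next
  case (Suc n)
  obtain T M where eq: "tri_run L Nk q r n = (T, M)" by (cases "tri_run L Nk q r n")
  note IH = Suc[unfolded eq fst_conv snd_conv]
  show ?case
  proof (cases "M = {}")
    case True
    then show ?thesis using IH by (simp add: tri_run_Suc eq tri_step_def)
  next
    case False
    have finM: "finite M" using IH fin finite_subset by blast
    have iM: "select L M \<in> M" using select_in[OF finM False] .
    have MN: "M \<subseteq> Nk" and nnT: "nonneg_mat Nk (cur_q T)"
      and xsT: "\<forall>j\<in>Nk. (\<Sum>l\<in>Nk. cur_q T j l * x l) < x j"
      and hyT: "hyp_holds H Nk (cur_q T) (cur_r T)" using IH by simp_all
    note sp = step_props[OF fin MN iM nnT xp xsT hyT refl refl]
    have c: "card (M - {select L M}) = card Nk - Suc n"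
      using IH iM finM by (simp add: card_Diff_singleton)
    show ?thesis using sp IH MN c False
      by (simp add: tri_run_Suc eq tri_step_nonempty del: One_nat_def) blast
  qed
qed


theorem proposition3p1:
  fixes N Nk :: "'a set" and L :: "'a option \<Rightarrow> nat"
    and q :: "'a \<Rightarrow> 'a \<Rightarrow> real" and r :: "'a \<Rightarrow> real" and H :: hyp
  assumes "finite N" and "Nk \<subseteq> N" and "labeling N L"
    and "nonneg_mat Nk q" and "transient Nk q" and "hyp_holds H Nk q r"
  shows "\<forall>n < card Nk.
           (let T = fst (tri_run L Nk q r n); M = snd (tri_run L Nk q r n);
                i = select L M; T' = fst (tri_run L Nk q r (Suc n))
            in cur_q T i i < 1
               \<and> nonneg_mat Nk (cur_q T') \<and> transient Nk (cur_q T')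
               \<and> hyp_holds H Nk (cur_q T') (cur_r T'))"
proof (intro allI impI)
  fix n assume n: "n < card Nk"
  have fin: "finite Nk" using assms(1,2) finite_subset by blast
  obtain x where xp: "\<forall>i\<in>Nk. x i > 0" and xs: "\<forall>i\<in>Nk. (\<Sum>l\<in>Nk. q i l * x l) < x i"
    using vec_if_transient[OF fin assms(4,5)] by blast
  note inv = invariant[OF fin assms(4) xp xs assms(6), of L]
  obtain T M where eq: "tri_run L Nk q r n = (T, M)" by (cases "tri_run L Nk q r n")
  have MN: "M \<subseteq> Nk" and nnT: "nonneg_mat Nk (cur_q T)"
      and xsT: "\<forall>j\<in>Nk. (\<Sum>l\<in>Nk. cur_q T j l * x l) < x j"
      and hyT: "hyp_holds H Nk (cur_q T) (cur_r T)" and cM: "card M = card Nk - n"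
    using inv[of n] eq by simp_all
  have finM: "finite M" using MN fin finite_subset by blast
  have ne: "M \<noteq> {}" using cM n by auto
  have iM: "select L M \<in> M" using select_in[OF finM ne] .
  note sp = step_props[OF fin MN iM nnT xp xsT hyT refl refl]
  define T' where "T' = fst (tri_run L Nk q r (Suc n))"
  have nn': "nonneg_mat Nk (cur_q T')" and xs': "\<forall>j\<in>Nk. (\<Sum>l\<in>Nk. cur_q T' j l * x l) < x j"
    and hy': "hyp_holds H Nk (cur_q T') (cur_r T')" using inv[of "Suc n"] unfolding T'_def by simp_all
  have tr': "transient Nk (cur_q T')" by (rule transient_if_vec[OF fin nn' xp xs'])
  show "let T = fst (tri_run L Nk q r n); M = snd (tri_run L Nk q r n);
                i = select L M; T' = fst (tri_run L Nk q r (Suc n))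
            in cur_q T i i < 1
               \<and> nonneg_mat Nk (cur_q T') \<and> transient Nk (cur_q T')
               \<and> hyp_holds H Nk (cur_q T') (cur_r T')"
    using sp nn' tr' hy' unfolding Let_def eq T'_def by simp
qed

end
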